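(* There exists a decreasing sequence $(\kappa_n)_{n=1}^\infty\subset(0,1/2)$ with $\kappa_n\to0$ such that each $T_{\kappa_n}$ is Markov, and each $\kappa_n$ satisfies $(2+2\kappa_n)^n\kappa_n=1$. Writing $T=T_{\kappa_n}$, a Markov partition for $T$ is, for $n=1$, $\{(-1,-\tfrac12),(-\tfrac12,-\kappa_1),(-\kappa_1,0),(0,\kappa_1),(\kappa_1,\tfrac12),(\tfrac12,1)\}$, and for $n\geq2$ it consists of the intervals $(-1,T(-\kappa_n))$; $(T^i(-\kappa_n),T^{i+1}(-\kappa_n))$ for $1\le i\le n-2$; $(T^{n-1}(-\kappa_n),-\tfrac12)$, $(-\tfrac12,-\kappa_n)$, $(-\kappa_n,0)$, $(0,\kappa_n)$, $(\kappa_n,\tfrac12)$, $(\tfrac12,T^{n-1}(\kappa_n))$; $(T^{i+1}(\kappa_n),T^i(\kappa_n))$ for $1\le i\le n-2$; and $(T(\kappa_n),1)$.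
   Context: For $\kappa\in(0,1/2)$, the paired tent map $T_\kappa:[-1,1]\to[-1,1]$ is $T_\kappa(x)=2(1+\kappa)(x+1)-1$ for $x\in[-1,-1/2]$, $T_\kappa(x)=-2(1+\kappa)x-1$ for $x\in[-1/2,0)$, $T_\kappa(0)=0$, $T_\kappa(x)=-2(1+\kappa)x+1$ for $x\in(0,1/2]$, $T_\kappa(x)=2(1+\kappa)(x-1)+1$ for $x\in[1/2,1]$. A map $T$ of an interval $I$ is Markov if there is a finite collection $\{R_i\}_{i=1}^r$ of disjoint open intervals (a Markov partition) such that $I\setminus\bigcup_iR_i$ is exactly the set of endpoints of the $R_i$, and whenever $R_i\cap T(R_j)\neq\emptyset$, we have $R_i\subset T(R_j)$. *)

theory Defs
  imports "HOL-Analysis.Analysis"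
begin

text \<open>The paired tent map T_kappa on [-1,1] (values outside [-1,1] are irrelevant).\<close>
definition paired_tent :: "real \<Rightarrow> real \<Rightarrow> real" where
  "paired_tent k x =
     (if x \<le> -1/2 then 2*(1+k)*(x+1) - 1
      else if x < 0 then -2*(1+k)*x - 1
      else if x = 0 then 0
      else if x \<le> 1/2 then -2*(1+k)*x + 1
      else 2*(1+k)*(x-1) + 1)"

text \<open>A Markov partition of the interval I for T: a finite collection of disjoint
  nonempty open intervals {a<..<b}, represented by their endpoint pairs (a,b), such that
  I minus their union is exactly the set of their endpoints, and whenever
  R_i meets T(R_j), R_i is contained in T(R_j).\<close>
definition markov_partition :: "(real \<Rightarrow> real) \<Rightarrow> real set \<Rightarrow> (real \<times> real) set \<Rightarrow> bool" where
  "markov_partition T I P \<longleftrightarrow>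
     finite P \<and> P \<noteq> {} \<and>
     (\<forall>(a,b)\<in>P. a < b) \<and>
     (\<forall>p\<in>P. \<forall>q\<in>P. p \<noteq> q \<longrightarrow> {fst p<..<snd p} \<inter> {fst q<..<snd q} = {}) \<and>
     I - (\<Union>(a,b)\<in>P. {a<..<b}) = (\<Union>(a,b)\<in>P. {a, b}) \<and>
     (\<forall>p\<in>P. \<forall>q\<in>P. {fst p<..<snd p} \<inter> T ` {fst q<..<snd q} \<noteq> {}
                \<longrightarrow> {fst p<..<snd p} \<subseteq> T ` {fst q<..<snd q})"

definition is_markov :: "(real \<Rightarrow> real) \<Rightarrow> real set \<Rightarrow> bool" where
  "is_markov T I \<longleftrightarrow> (\<exists>P. markov_partition T I P)"

definition tent_partition :: "real \<Rightarrow> nat \<Rightarrow> (real \<times> real) set" where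
  "tent_partition k n =
    (let T = paired_tent k in
     if n = 1 then
       {(-1, -1/2), (-1/2, -k), (-k, 0), (0, k), (k, 1/2), (1/2, 1)}
     else
       {(-1, T (-k))}
       \<union> {((T ^^ i) (-k), (T ^^ (i+1)) (-k)) | i. 1 \<le> i \<and> i \<le> n - 2}
       \<union> {((T ^^ (n-1)) (-k), -1/2), (-1/2, -k), (-k, 0), (0, k), (k, 1/2),
          (1/2, (T ^^ (n-1)) k)}
       \<union> {((T ^^ (i+1)) k, (T ^^ i) k) | i. 1 \<le> i \<and> i \<le> n - 2}
       \<union> {(T k, 1)})"

end

theory Submission
  imports Defs
begin

lemma markov_from_points:
  fixes x :: "nat \<Rightarrow> real" and T :: "real \<Rightarrow> real" and m :: nat
  assumes mono: "\<And>i j. i < j \<Longrightarrow> j \<le> m \<Longrightarrow> x i < x j"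
  and m: "0 < m"
  and img: "\<And>j. j < m \<Longrightarrow> \<exists>a b. a < b \<and> b \<le> m \<and> T ` {x j<..<x (Suc j)} = {x a<..<x b}"
  shows "markov_partition T {x 0..x m} ((\<lambda>j. (x j, x (Suc j))) ` {..<m})"
proof -
  have le: "x i \<le> x j" if "i \<le> j" "j \<le> m" for i j
    using mono[of i j] that by (cases "i = j") auto
  have lt_iff: "x i < x j \<longleftrightarrow> i < j" if "i \<le> m" "j \<le> m" for i j
    using mono[of i j] le[of j i] that by (cases "i < j") auto
  have le_iff: "x i \<le> x j \<longleftrightarrow> i \<le> j" if "i \<le> m" "j \<le> m" for i j
    using lt_iff[of j i] that by linarith
  define P where "P = (\<lambda>j. (x j, x (Suc j))) ` {..<m}"
  have fin: "finite P" "P \<noteq> {}" using m by (auto simp: P_def)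
  have ord: "\<forall>(a,b)\<in>P. a < b" using mono by (auto simp: P_def)
  have disj: "\<forall>p\<in>P. \<forall>q\<in>P. p \<noteq> q \<longrightarrow> {fst p<..<snd p} \<inter> {fst q<..<snd q} = {}"
  proof (intro ballI impI)
    fix p q assume "p \<in> P" "q \<in> P" "p \<noteq> q"
    then obtain i j where ij: "i < m" "j < m" "p = (x i, x (Suc i))" "q = (x j, x (Suc j))" "i \<noteq> j"
      by (auto simp: P_def)
    show "{fst p<..<snd p} \<inter> {fst q<..<snd q} = {}"
    proof (cases "i < j")
      case True
      then have "x (Suc i) \<le> x j" using le[of "Suc i" j] ij by auto
      then show ?thesis using ij by auto
    next
      case False
      then have "x (Suc j) \<le> x i" using le[of "Suc j" i] ij by auto
      then show ?thesis using ij by auto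
    qed
  qed
  have compl: "{x 0..x m} - (\<Union>(a,b)\<in>P. {a<..<b}) = (\<Union>(a,b)\<in>P. {a, b})"
  proof
    show "{x 0..x m} - (\<Union>(a,b)\<in>P. {a<..<b}) \<subseteq> (\<Union>(a,b)\<in>P. {a, b})"
    proof
      fix t assume t: "t \<in> {x 0..x m} - (\<Union>(a,b)\<in>P. {a<..<b})"
      then have t0: "x 0 \<le> t" "t \<le> x m" and nt: "\<And>j. j < m \<Longrightarrow> \<not> (x j < t \<and> t < x (Suc j))"
        by (auto simp: P_def)
      define J where "J = {j. j \<le> m \<and> x j \<le> t}"
      have "finite J" "0 \<in> J" using t0 by (auto simp: J_def)
      define j where "j = Max J"
      have jJ: "j \<in> J" using \<open>finite J\<close> \<open>0 \<in> J\<close> j_def Max_in by blast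
      have jmax: "\<And>i. i \<in> J \<Longrightarrow> i \<le> j" using \<open>finite J\<close> j_def by simp
      have "\<exists>i\<le>m. t = x i"
      proof (cases "j = m")
        case True then show ?thesis using jJ t0 by (auto simp: J_def)
      next
        case False
        then have "j < m" using jJ by (auto simp: J_def)
        then have "Suc j \<notin> J" using jmax by fastforce
        then have "t < x (Suc j)" using \<open>j < m\<close> by (auto simp: J_def)
        then have "t = x j" using nt[OF \<open>j < m\<close>] jJ by (auto simp: J_def)
        then show ?thesis using \<open>j < m\<close> less_imp_le by blast
      qed
      then obtain i where i: "i \<le> m" "t = x i" by auto
      show "t \<in> (\<Union>(a,b)\<in>P. {a, b})"
      proof (cases "i = m")
        case True
        then show ?thesis using i m unfolding P_def
          by (auto intro!: bexI[of _ "m - 1"])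
      next
        case False
        then show ?thesis using i unfolding P_def by (auto intro!: bexI[of _ i])
      qed
    qed
  next
    show "(\<Union>(a,b)\<in>P. {a, b}) \<subseteq> {x 0..x m} - (\<Union>(a,b)\<in>P. {a<..<b})"
    proof
      fix t assume "t \<in> (\<Union>(a,b)\<in>P. {a, b})"
      then obtain i where i: "i \<le> m" "t = x i" unfolding P_def by (auto; metis Suc_leI less_imp_le)
      have "t \<in> {x 0..x m}" using le[of 0 i] le[of i m] i by auto
      moreover have "t \<notin> {x j<..<x (Suc j)}" if "j < m" for j
        using lt_iff[of j i] lt_iff[of i "Suc j"] i that by auto
      ultimately show "t \<in> {x 0..x m} - (\<Union>(a,b)\<in>P. {a<..<b})" unfolding P_def by auto
    qed
  qed
  have mk: "\<forall>p\<in>P. \<forall>q\<in>P. {fst p<..<snd p} \<inter> T ` {fst q<..<snd q} \<noteq> {}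
                \<longrightarrow> {fst p<..<snd p} \<subseteq> T ` {fst q<..<snd q}"
  proof (intro ballI impI)
    fix p q assume "p \<in> P" "q \<in> P" and ne: "{fst p<..<snd p} \<inter> T ` {fst q<..<snd q} \<noteq> {}"
    then obtain i j where ij: "i < m" "j < m" "p = (x i, x (Suc i))" "q = (x j, x (Suc j))"
      by (auto simp: P_def)
    obtain a b where ab: "a < b" "b \<le> m" "T ` {x j<..<x (Suc j)} = {x a<..<x b}"
      using img[OF \<open>j < m\<close>] by blast
    from ne obtain s where s0: "s \<in> {fst p<..<snd p}" "s \<in> T ` {fst q<..<snd q}" by blast
    then have s: "x i < s" "s < x (Suc i)" "x a < s" "s < x b"
      using ij ab by auto
    have "x a < x (Suc i)" "x i < x b" using s by auto
    then have "a < Suc i" "i < b" using lt_iff ab ij by auto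
    then have "x a \<le> x i" "x (Suc i) \<le> x b" using le_iff ab ij by auto
    then show "{fst p<..<snd p} \<subseteq> T ` {fst q<..<snd q}" using ij ab by auto
  qed
  show ?thesis unfolding markov_partition_def P_def[symmetric]
    using fin ord disj compl mk by blast
qed

lemma affine_img_pos:
  fixes T :: "real \<Rightarrow> real"
  assumes "\<alpha> > 0" "\<And>t. c < t \<Longrightarrow> t < d \<Longrightarrow> T t = \<alpha>*t+\<beta>"
  shows "T ` {c<..<d} = {\<alpha>*c+\<beta><..<\<alpha>*d+\<beta>}"
proof
  show "T ` {c<..<d} \<subseteq> {\<alpha>*c+\<beta><..<\<alpha>*d+\<beta>}" using assms by auto
  show "{\<alpha>*c+\<beta><..<\<alpha>*d+\<beta>} \<subseteq> T ` {c<..<d}"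
  proof
    fix s assume s: "s \<in> {\<alpha>*c+\<beta><..<\<alpha>*d+\<beta>}"
    define t where "t = (s - \<beta>)/\<alpha>"
    have "c < t" "t < d" using s assms(1) by (auto simp: t_def field_simps)
    moreover have "s = T t" using assms \<open>c < t\<close> \<open>t < d\<close> by (simp add: t_def)
    ultimately show "s \<in> T ` {c<..<d}" by auto
  qed
qed

lemma affine_img_neg:
  fixes T :: "real \<Rightarrow> real"
  assumes "\<alpha> < 0" "\<And>t. c < t \<Longrightarrow> t < d \<Longrightarrow> T t = \<alpha>*t+\<beta>"
  shows "T ` {c<..<d} = {\<alpha>*d+\<beta><..<\<alpha>*c+\<beta>}"
proof
  show "T ` {c<..<d} \<subseteq> {\<alpha>*d+\<beta><..<\<alpha>*c+\<beta>}" using assms by (auto simp: mult_strict_left_mono_neg)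
  show "{\<alpha>*d+\<beta><..<\<alpha>*c+\<beta>} \<subseteq> T ` {c<..<d}"
  proof
    fix s assume s: "s \<in> {\<alpha>*d+\<beta><..<\<alpha>*c+\<beta>}"
    define t where "t = (s - \<beta>)/\<alpha>"
    have "c < t" "t < d" using s assms(1) by (auto simp: t_def field_simps)
    moreover have "s = T t" using assms \<open>c < t\<close> \<open>t < d\<close> by (simp add: t_def)
    ultimately show "s \<in> T ` {c<..<d}" by auto
  qed
qed

lemma uminus_img_ioo: "uminus ` {a<..<b} = {-b<..<-(a::real)}"
  by (auto intro!: image_eqI[where x="- _"])

lemma tent_odd: "paired_tent k (-t) = - paired_tent k t"
proof (cases "t = -1/2 \<or> t = 1/2")
  case True then show ?thesis unfolding paired_tent_def by (auto simp: algebra_simps)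
next
  case False then show ?thesis unfolding paired_tent_def by (auto simp: algebra_simps)
qed

lemma tent_iter_odd: "(paired_tent k ^^ i) (-t) = - (paired_tent k ^^ i) t"
  by (induction i) (auto simp: tent_odd)

lemma tent_img_neg: "paired_tent k ` {-d<..<-c} = uminus ` (paired_tent k ` {c<..<d})"
proof -
  have "{-d<..<-c} = uminus ` {c<..<d}" by (simp add: uminus_img_ioo)
  then have "paired_tent k ` {-d<..<-c} = (\<lambda>t. paired_tent k (-t)) ` {c<..<d}"
    by (simp only: image_image)
  then show ?thesis by (simp add: image_image tent_odd)
qed

lemma tent_left: "t \<le> -1/2 \<Longrightarrow> paired_tent k t = (2+2*k)*t + ((2+2*k) - 1)"
  unfolding paired_tent_def by (auto simp: algebra_simps)

lemma tent_mid: "-1/2 < t \<Longrightarrow> t < 0 \<Longrightarrow> paired_tent k t = (-(2+2*k))*t + (-1)"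
  unfolding paired_tent_def by (auto simp: algebra_simps)

definition yv :: "real \<Rightarrow> nat \<Rightarrow> nat \<Rightarrow> real" where
  "yv k n j = (if j = 0 then -1 else if j < n then (2+2*k)^j*k - 1 else if j = n then -1/2
               else if j = n+1 then -k else 0)"

definition xv :: "real \<Rightarrow> nat \<Rightarrow> nat \<Rightarrow> real" where
  "xv k n j = (if j \<le> n+2 then yv k n j else - yv k n (2*n+4-j))"

context
  fixes k :: real and n :: nat
  assumes k0: "0 < k" and k1: "k < 1/2" and n1: "1 \<le> n" and eq: "(2+2*k)^n*k = 1"
begin

lemma lam_gt: "2 < 2+2*k" using k0 by simp

lemma pow_last: "(2+2*k)^(n-1)*k = 1/(2+2*k)"
proof -
  have "(2+2*k)^n = (2+2*k)^(n-1)*(2+2*k)" using n1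
    by (metis Suc_diff_1 less_le_trans power_Suc2 zero_less_one)
  then show ?thesis using eq k0 by (simp add: field_simps)
qed

lemma pow_small: "j \<le> n - 1 \<Longrightarrow> (2+2*k)^j*k < 1/2"
proof -
  assume j: "j \<le> n - 1"
  have "(2+2*k)^j*k \<le> (2+2*k)^(n-1)*k"
    using j k0 by (intro mult_right_mono power_increasing) auto
  also have "\<dots> < 1/2"
  proof -
    have "1/(2+2*k) < 1/2" using k0 by (simp add: field_simps)
    then show ?thesis using pow_last by simp
  qed
  finally show ?thesis .
qed

lemma iter: "1 \<le> i \<Longrightarrow> i \<le> n \<Longrightarrow> (paired_tent k ^^ i) (-k) = (2+2*k)^i*k - 1"
proof (induction i)
  case 0 then show ?case by simp
next
  case (Suc i)
  show ?case
  proof (cases "i = 0")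
    case True
    then show ?thesis using tent_mid[of "-k" k] k0 k1 by (simp add: algebra_simps)
  next
    case False
    then have ih: "(paired_tent k ^^ i) (-k) = (2+2*k)^i*k - 1" using Suc by simp
    have "(2+2*k)^i*k < 1/2" using pow_small[of i] Suc by simp
    then have "(2+2*k)^i*k - 1 \<le> -1/2" by simp
    have "(paired_tent k ^^ Suc i)(-k) = paired_tent k ((2+2*k)^i*k - 1)" using ih by simp
    also have "\<dots> = (2+2*k)*((2+2*k)^i*k - 1) + ((2+2*k) - 1)"
      using tent_left[of "(2+2*k)^i*k - 1" k] \<open>(2+2*k)^i*k - 1 \<le> -1/2\<close> by blast
    also have "\<dots> = (2+2*k)^(Suc i)*k - 1" by (simp add: algebra_simps)
    finally show ?thesis .
  qed
qed

lemma powpos: "0 < (2+2*k)^j*k" using k0 by simp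

lemma y_succ: "j < n + 2 \<Longrightarrow> yv k n j < yv k n (Suc j)"
proof -
  assume j: "j < n + 2"
  consider "j = 0" | "0 < j" "j < n - 1" | "0 < j" "j = n - 1" | "j = n" | "j = n + 1"
    using j by linarith
  then show ?thesis
  proof cases
    case 1 then show ?thesis using powpos[of 1] n1 by (auto simp: yv_def)
  next
    case 2
    have "(2+2*k)^j*k < (2+2*k)^(Suc j)*k" using k0 by (intro mult_strict_right_mono power_strict_increasing) auto
    then show ?thesis using 2 by (auto simp: yv_def)
  next
    case 3 then show ?thesis using pow_small[of j] by (auto simp: yv_def)
  next
    case 4 then show ?thesis using k1 by (auto simp: yv_def)
  next
    case 5 then show ?thesis using k0 by (auto simp: yv_def)
  qed
qed

lemma x_succ: "j < 2*n + 4 \<Longrightarrow> xv k n j < xv k n (Suc j)"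
proof -
  assume j: "j < 2*n+4"
  consider "j < n + 2" | "j = n + 2" | "n + 2 < j" by linarith
  then show ?thesis
  proof cases
    case 1 then show ?thesis using y_succ by (simp add: xv_def)
  next
    case 2 then show ?thesis using k0 by (simp add: xv_def yv_def)
  next
    case 3
    have "yv k n (2*n+4 - Suc j) < yv k n (Suc (2*n+4 - Suc j))" using 3 j by (intro y_succ) auto
    moreover have "Suc (2*n+4 - Suc j) = 2*n+4-j" using j by simp
    ultimately show ?thesis using 3 by (simp add: xv_def)
  qed
qed

lemma x_mono: "i < j \<Longrightarrow> j \<le> 2*n+4 \<Longrightarrow> xv k n i < xv k n j"
proof (induction j)
  case 0 then show ?case by simp
next
  case (Suc j)
  show ?case
  proof (cases "i = j")
    case True then show ?thesis using x_succ Suc by simp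
  next
    case False
    then have "xv k n i < xv k n j" using Suc by simp
    also have "\<dots> < xv k n (Suc j)" using x_succ Suc by simp
    finally show ?thesis .
  qed
qed

lemma x_sym: "j \<le> 2*n+4 \<Longrightarrow> xv k n (2*n+4 - j) = - xv k n j"
  by (auto simp: xv_def yv_def)


lemma img_low:
  assumes j: "j < n+2"
  shows "\<exists>a b. a < b \<and> b \<le> 2*n+4 \<and>
           paired_tent k ` {xv k n j<..<xv k n (Suc j)} = {xv k n a<..<xv k n b}"
proof -
  have ex: "\<exists>a b. a < b \<and> b \<le> 2*n+4 \<and> S = {xv k n a<..<xv k n b}"
    if "a < b" "b \<le> 2*n+4" "S = {xv k n a<..<xv k n b}" for a b S
    using that by blast
  have n1': "(2+2*k)^1*k = 1" if "n = 1" using eq that by simp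
  consider "j < n - 1" | "j = n - 1" "n = 1" | "j = n - 1" "n \<ge> 2" | "j = n" | "j = n + 1"
    using j n1 by linarith
  then show ?thesis
  proof cases
    case 1
    have sj: "Suc j < n" using 1 by linarith
    have d: "xv k n (Suc j) = (2+2*k)^(Suc j)*k - 1" using sj by (simp add: xv_def yv_def)
    have "(2+2*k)^(Suc j)*k < 1/2" using pow_small[of "Suc j"] 1 by simp
    then have hT: "paired_tent k t = (2+2*k)*t + ((2+2*k)-1)"
      if "xv k n j < t" "t < xv k n (Suc j)" for t
      using that d by (intro tent_left) simp
    have I: "paired_tent k ` {xv k n j<..<xv k n (Suc j)} =
       {(2+2*k)*xv k n j + ((2+2*k)-1)<..<(2+2*k)*xv k n (Suc j) + ((2+2*k)-1)}"
      using k0 hT by (intro affine_img_pos) auto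
    have up: "(2+2*k)*xv k n (Suc j) + ((2+2*k)-1) = xv k n (if j+2 < n then j+2 else n+2)"
    proof (cases "j + 2 < n")
      case True then show ?thesis using d by (simp add: xv_def yv_def algebra_simps)
    next
      case False
      then have "j + 2 = n" using 1 by linarith
      then have e: "(2+2*k)^(Suc (Suc j))*k = 1" using eq by simp
      have "(2+2*k)*xv k n (Suc j) + ((2+2*k)-1) = (2+2*k)^(Suc(Suc j))*k - 1"
        unfolding d by (simp add: algebra_simps)
      also have "\<dots> = 0" using e by simp
      also have "\<dots> = xv k n (n+2)" by (simp add: xv_def yv_def)
      finally show ?thesis using False by simp
    qed
    have lo: "(2+2*k)*xv k n j + ((2+2*k)-1) = xv k n (if j = 0 then 0 else j+1)"
    proof (cases "j = 0")
      case True then show ?thesis by (simp add: xv_def yv_def algebra_simps)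
    next
      case False then show ?thesis using 1 sj by (simp add: xv_def yv_def algebra_simps)
    qed
    show ?thesis using I up lo 1 by (intro ex[of "if j = 0 then 0 else j+1" "if j+2 < n then j+2 else n+2"]) auto
  next
    case 2
    have hT: "paired_tent k t = (2+2*k)*t + ((2+2*k)-1)"
      if "xv k n j < t" "t < xv k n (Suc j)" for t
      using that 2 by (intro tent_left) (simp add: xv_def yv_def)
    have I: "paired_tent k ` {xv k n j<..<xv k n (Suc j)} =
       {(2+2*k)*xv k n j + ((2+2*k)-1)<..<(2+2*k)*xv k n (Suc j) + ((2+2*k)-1)}"
      using k0 hT by (intro affine_img_pos) auto
    show ?thesis using I 2 by (intro ex[of 0 4]) (auto simp: xv_def yv_def algebra_simps)
  next
    case 3
    have hT: "paired_tent k t = (2+2*k)*t + ((2+2*k)-1)"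
      if "xv k n j < t" "t < xv k n (Suc j)" for t
      using that 3 by (intro tent_left) (simp add: xv_def yv_def)
    have I: "paired_tent k ` {xv k n j<..<xv k n (Suc j)} =
       {(2+2*k)*xv k n j + ((2+2*k)-1)<..<(2+2*k)*xv k n (Suc j) + ((2+2*k)-1)}"
      using k0 hT by (intro affine_img_pos) auto
    have c: "xv k n j = (2+2*k)^(n-1)*k - 1" using 3 by (simp add: xv_def yv_def)
    have "(2+2*k)*((2+2*k)^(n-1)*k) = 1" using pow_last k0 by simp
    then have "(2+2*k)*xv k n j + ((2+2*k)-1) = 0" unfolding c
      by (simp add: algebra_simps)
    then have lo: "(2+2*k)*xv k n j + ((2+2*k)-1) = xv k n (n+2)"
      by (simp add: xv_def yv_def)
    have up: "(2+2*k)*xv k n (Suc j) + ((2+2*k)-1) = xv k n (n+3)" using 3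
      by (simp add: xv_def yv_def algebra_simps)
    show ?thesis using I lo up by (intro ex[of "n+2" "n+3"]) auto
  next
    case 4
    have hT: "paired_tent k t = (-(2+2*k))*t + (-1)"
      if "xv k n j < t" "t < xv k n (Suc j)" for t
      using that 4 k0 n1 by (intro tent_mid) (auto simp: xv_def yv_def)
    have I: "paired_tent k ` {xv k n j<..<xv k n (Suc j)} =
       {(-(2+2*k))*xv k n (Suc j) + (-1)<..<(-(2+2*k))*xv k n j + (-1)}"
      using k0 hT by (intro affine_img_neg) auto
    have up: "(-(2+2*k))*xv k n j + (-1) = xv k n (n+3)" using 4 n1
      by (simp add: xv_def yv_def algebra_simps)
    have lo: "(-(2+2*k))*xv k n (Suc j) + (-1) = xv k n (if n = 1 then 3 else 1)"
    proof (cases "n = 1")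
      case True then show ?thesis using 4 n1' by (simp add: xv_def yv_def algebra_simps)
    next
      case False then show ?thesis using 4 n1 by (simp add: xv_def yv_def algebra_simps)
    qed
    show ?thesis using I lo up by (intro ex[of "if n = 1 then 3 else 1" "n+3"]) auto
  next
    case 5
    have hT: "paired_tent k t = (-(2+2*k))*t + (-1)"
      if "xv k n j < t" "t < xv k n (Suc j)" for t
      using that 5 k0 k1 n1 by (intro tent_mid) (auto simp: xv_def yv_def)
    have I: "paired_tent k ` {xv k n j<..<xv k n (Suc j)} =
       {(-(2+2*k))*xv k n (Suc j) + (-1)<..<(-(2+2*k))*xv k n j + (-1)}"
      using k0 hT by (intro affine_img_neg) auto
    have lo: "(-(2+2*k))*xv k n (Suc j) + (-1) = xv k n 0" using 5 n1
      by (simp add: xv_def yv_def algebra_simps)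
    have up: "(-(2+2*k))*xv k n j + (-1) = xv k n (if n = 1 then 3 else 1)"
    proof (cases "n = 1")
      case True then show ?thesis using 5 n1' by (simp add: xv_def yv_def algebra_simps)
    next
      case False then show ?thesis using 5 n1 by (simp add: xv_def yv_def algebra_simps)
    qed
    show ?thesis using I lo up by (intro ex[of 0 "if n = 1 then 3 else 1"]) auto
  qed
qed


lemma img_all:
  assumes j: "j < 2*n+4"
  shows "\<exists>a b. a < b \<and> b \<le> 2*n+4 \<and>
           paired_tent k ` {xv k n j<..<xv k n (Suc j)} = {xv k n a<..<xv k n b}"
proof (cases "j < n+2")
  case True then show ?thesis using img_low by blast
next
  case False
  define i where "i = 2*n+3-j"
  have i: "i < n+2" using False j by (simp add: i_def)
  obtain a b where ab: "a < b" "b \<le> 2*n+4"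
    "paired_tent k ` {xv k n i<..<xv k n (Suc i)} = {xv k n a<..<xv k n b}"
    using img_low[OF i] by blast
  have e1: "xv k n j = - xv k n (Suc i)"
    using x_sym[of "Suc i"] i j False by (simp add: i_def Suc_diff_Suc)
  have e2: "xv k n (Suc j) = - xv k n i"
    using x_sym[of i] i j False by (simp add: i_def)
  have "paired_tent k ` {xv k n j<..<xv k n (Suc j)} = uminus ` {xv k n a<..<xv k n b}"
    unfolding e1 e2 tent_img_neg ab(3) ..
  also have "\<dots> = {xv k n (2*n+4-b)<..<xv k n (2*n+4-a)}"
    using x_sym[of a] x_sym[of b] ab by (simp add: uminus_img_ioo)
  finally show ?thesis using ab by (intro exI[of _ "2*n+4-b"] exI[of _ "2*n+4-a"]) auto
qed

lemma Tx: "1 \<le> i \<Longrightarrow> i \<le> n-1 \<Longrightarrow> (paired_tent k ^^ i) (-k) = xv k n i"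
  using iter[of i] by (auto simp: xv_def yv_def)

lemma Txp: "1 \<le> i \<Longrightarrow> i \<le> n-1 \<Longrightarrow> (paired_tent k ^^ i) k = xv k n (2*n+4-i)"
  using Tx[of i] tent_iter_odd[where k=k and i=i and t=k] x_sym[of i] by auto

lemma partition_eq:
  "tent_partition k n = (\<lambda>j. (xv k n j, xv k n (Suc j))) ` {..<2*n+4}"
proof (cases "n = 1")
  case True
  have "{..<2*n+4} = {0,1,2,3,4,5::nat}" using True by auto
  then show ?thesis using True
    by (simp add: tent_partition_def xv_def yv_def insert_commute)
next
  case False
  then have n2: "n \<ge> 2" using n1 by simp
  define f where "f = (\<lambda>j. (xv k n j, xv k n (Suc j)))"
  let ?T = "paired_tent k"
  have A: "{((?T ^^ i) (-k), (?T ^^ (i+1)) (-k)) | i. 1 \<le> i \<and> i \<le> n - 2} = f ` {1..n-2}"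
    unfolding setcompr_eq_image f_def
  proof (intro image_cong)
    fix i assume "i \<in> {1..n-2}"
    then have "1 \<le> i" "i \<le> n-2" by auto
    then have "(?T ^^ i) (-k) = xv k n i" "(?T ^^ (i+1)) (-k) = xv k n (Suc i)"
      using Tx[of i] Tx[of "i+1"] by auto
    then show "((?T ^^ i) (-k), (?T ^^ (i+1)) (-k)) = (xv k n i, xv k n (Suc i))" by simp
  qed auto
  have B: "{((?T ^^ (i+1)) k, (?T ^^ i) k) | i. 1 \<le> i \<and> i \<le> n - 2} = f ` {n+5..2*n+2}"
  proof
    show "{((?T ^^ (i+1)) k, (?T ^^ i) k) | i. 1 \<le> i \<and> i \<le> n - 2} \<subseteq> f ` {n+5..2*n+2}"
    proof
      fix p assume "p \<in> {((?T ^^ (i+1)) k, (?T ^^ i) k) | i. 1 \<le> i \<and> i \<le> n - 2}"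
      then obtain i where i: "1 \<le> i" "i \<le> n-2" "p = ((?T ^^ (i+1)) k, (?T ^^ i) k)" by blast
      have h1: "(?T ^^ i) k = xv k n (2*n+4-i)" using Txp[of i] i n2 by auto
      have h2: "(?T ^^ (i+1)) k = xv k n (2*n+3-i)"
      proof -
        have "(?T ^^ (i+1)) k = xv k n (2*n+4-(i+1))" using Txp[of "i+1"] i n2 by linarith
        moreover have "2*n+4-(i+1) = 2*n+3-i" by simp
        ultimately show ?thesis by simp
      qed
      have s: "Suc (2*n+3-i) = 2*n+4-i" using i by simp
      have "p = f (2*n+3-i)" unfolding f_def s by (simp only: i(3) h1 h2)
      moreover have "2*n+3-i \<in> {n+5..2*n+2}" using i n2 by auto
      ultimately show "p \<in> f ` {n+5..2*n+2}" by blast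
    qed
    show "f ` {n+5..2*n+2} \<subseteq> {((?T ^^ (i+1)) k, (?T ^^ i) k) | i. 1 \<le> i \<and> i \<le> n - 2}"
    proof
      fix p assume "p \<in> f ` {n+5..2*n+2}"
      then obtain j where j: "n+5 \<le> j" "j \<le> 2*n+2" "p = f j" by auto
      define i where "i = 2*n+3-j"
      have i: "1 \<le> i" "i \<le> n-2" "j = 2*n+3-i" using j by (auto simp: i_def)
      have h1: "(?T ^^ i) k = xv k n (2*n+4-i)" using Txp[of i] i n2 by auto
      have h2: "(?T ^^ (i+1)) k = xv k n (2*n+3-i)"
      proof -
        have "(?T ^^ (i+1)) k = xv k n (2*n+4-(i+1))" using Txp[of "i+1"] i n2 by linarith
        moreover have "2*n+4-(i+1) = 2*n+3-i" by simp
        ultimately show ?thesis by simp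
      qed
      have s: "Suc (2*n+3-i) = 2*n+4-i" using i by simp
      have "p = ((?T ^^ (i+1)) k, (?T ^^ i) k)" unfolding h1 h2 j(3) f_def i(3) s ..
      then show "p \<in> {((?T ^^ (i+1)) k, (?T ^^ i) k) | i. 1 \<le> i \<and> i \<le> n - 2}"
        using i by blast
    qed
  qed
  have C: "{(-1, ?T (-k))} = {f 0}"
    using Tx[of 1] n2 by (simp add: f_def xv_def yv_def)
  have D: "{((?T ^^ (n-1)) (-k), -1/2), (-1/2, -k), (-k, 0), (0, k), (k, 1/2),
          (1/2, (?T ^^ (n-1)) k)} = {f (n-1), f n, f (n+1), f (n+2), f (n+3), f (n+4)}"
  proof -
    have a: "f (n-1) = ((?T ^^ (n-1)) (-k), -1/2)"
    proof -
      have "Suc (n-1) = n" using n2 by simp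
      then show ?thesis using Tx[of "n-1"] n2 by (simp add: f_def xv_def yv_def)
    qed
    have b: "f n = (-1/2, -k)" "f (n+1) = (-k, 0)" "f (n+2) = (0, k)" "f (n+3) = (k, 1/2)"
      using n2 by (simp_all add: f_def xv_def yv_def)
    have c: "f (n+4) = (1/2, (?T ^^ (n-1)) k)"
    proof -
      have "2*n+4-(n-1) = Suc (n+4)" using n2 by simp
      then show ?thesis using Txp[of "n-1"] n2 by (simp add: f_def xv_def yv_def)
    qed
    show ?thesis unfolding a b c ..
  qed
  have E: "{(?T k, 1)} = {f (2*n+3)}"
    using Txp[of 1] n2 by (simp add: f_def xv_def yv_def)
  have idx: "{..<2*n+4} = {0} \<union> {1..n-2} \<union> {n-1, n, n+1, n+2, n+3, n+4} \<union> {n+5..2*n+2} \<union> {2*n+3}"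
    using n2 by auto
  have "tent_partition k n = {f 0} \<union> f ` {1..n-2} \<union> {f (n-1), f n, f (n+1), f (n+2), f (n+3), f (n+4)}
        \<union> f ` {n+5..2*n+2} \<union> {f (2*n+3)}"
    unfolding tent_partition_def Let_def using False A B C D E by simp
  also have "\<dots> = f ` {..<2*n+4}" unfolding idx image_Un by simp
  finally show ?thesis unfolding f_def .
qed

end

definition kap :: "nat \<Rightarrow> real" where
  "kap n = (SOME k. 0 < k \<and> k < 1/2 \<and> (2+2*k)^n*k = 1)"

lemma kap_ex:
  assumes n: "1 \<le> n"
  shows "\<exists>k::real. 0 < k \<and> k < 1/2 \<and> (2+2*k)^n*k = 1"
proof -
  let ?f = "\<lambda>k::real. (2+2*k)^n*k"
  have "(3::real)^1 \<le> 3^n" using n by (intro power_increasing) auto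
  then have f2: "?f (1/2) > 1" by simp
  have "continuous_on {0..1/2} ?f" by (intro continuous_intros)
  then obtain k where k: "0 \<le> k" "k \<le> 1/2" "?f k = 1"
    using IVT'[of ?f 0 1 "1/2"] f2 by auto
  have "k \<noteq> 0" using k by auto
  moreover have "k \<noteq> 1/2"
  proof
    assume "k = 1/2"
    then have "?f (1/2) = 1" using k(3) by (simp only:)
    then show False using f2 by linarith
  qed
  ultimately show ?thesis using k by (intro exI[of _ k]) auto
qed

lemma kap_prop: "1 \<le> n \<Longrightarrow> 0 < kap n \<and> kap n < 1/2 \<and> (2+2*kap n)^n*kap n = 1"
  unfolding kap_def by (rule someI_ex) (rule kap_ex)

lemma kap_dec: assumes "1 \<le> n" shows "kap (Suc n) < kap n"
proof (rule ccontr)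
  assume "\<not> kap (Suc n) < kap n"
  then have le: "kap n \<le> kap (Suc n)" by simp
  have p1: "0 < kap n" "(2+2*kap n)^n*kap n = 1" using kap_prop[of n] assms by auto
  have p2: "(2+2*kap (Suc n))^(Suc n)*kap (Suc n) = 1" using kap_prop[of "Suc n"] assms by auto
  have "(2+2*kap n)^(Suc n) \<le> (2+2*kap (Suc n))^(Suc n)"
    using le p1 by (intro power_mono) auto
  then have "(2+2*kap n)^(Suc n) * kap n \<le> (2+2*kap (Suc n))^(Suc n) * kap (Suc n)"
    using le p1 by (intro mult_mono) auto
  moreover have "(2+2*kap n)^(Suc n) * kap n = (2+2*kap n) * ((2+2*kap n)^n*kap n)"
    by (simp add: mult.assoc)
  ultimately have "(2+2*kap n) * ((2+2*kap n)^n*kap n) \<le> 1" using p2 by linarith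
  then show False using p1 by simp
qed

lemma kap_lim: "kap \<longlonglongrightarrow> 0"
proof (rule tendsto_sandwich[of "\<lambda>_. 0" _ _ "\<lambda>n. (1/2::real)^n"])
  show "\<forall>\<^sub>F n in sequentially. 0 \<le> kap n"
    by (rule eventually_sequentiallyI[of 1]) (use kap_prop in force)
  show "\<forall>\<^sub>F n in sequentially. kap n \<le> (1/2)^n"
  proof (rule eventually_sequentiallyI[of 1])
    fix n :: nat assume n: "1 \<le> n"
    have p: "0 < kap n" "(2+2*kap n)^n*kap n = 1" using kap_prop[OF n] by auto
    have "(2::real)^n \<le> (2+2*kap n)^n" using p by (intro power_mono) auto
    then have "2^n * kap n \<le> 1" using p by (metis mult_right_mono less_imp_le)
    then show "kap n \<le> (1/2)^n" by (simp add: power_one_over field_simps)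
  qed
  show "(\<lambda>_. 0::real) \<longlonglongrightarrow> 0" by simp
  show "(\<lambda>n. (1/2::real)^n) \<longlonglongrightarrow> 0" by (rule LIMSEQ_power_zero) simp
qed

lemma kap_markov: assumes n: "1 \<le> n"
  shows "markov_partition (paired_tent (kap n)) {-1..1} (tent_partition (kap n) n)"
proof -
  have p: "0 < kap n" "kap n < 1/2" "(2+2*kap n)^n*kap n = 1" using kap_prop[OF n] by auto
  have e0: "xv (kap n) n 0 = -1" "xv (kap n) n (2*n+4) = 1" by (simp_all add: xv_def yv_def)
  have "markov_partition (paired_tent (kap n)) {xv (kap n) n 0..xv (kap n) n (2*n+4)}
          ((\<lambda>j. (xv (kap n) n j, xv (kap n) n (Suc j))) ` {..<2*n+4})"
    by (rule markov_from_points) (use x_mono[OF p(1) p(2) n p(3)] img_all[OF p(1) p(2) n p(3)] in auto)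
  then show ?thesis using partition_eq[OF p(1) p(2) n p(3)] e0 by simp
qed

theorem lemma4:
  shows "\<exists>\<kappa> :: nat \<Rightarrow> real.
     (\<forall>n\<ge>1. 0 < \<kappa> n \<and> \<kappa> n < 1/2) \<and>
     (\<forall>n\<ge>1. \<kappa> (Suc n) < \<kappa> n) \<and>
     \<kappa> \<longlonglongrightarrow> 0 \<and>
     (\<forall>n\<ge>1. is_markov (paired_tent (\<kappa> n)) {-1..1}) \<and>
     (\<forall>n\<ge>1. (2 + 2 * \<kappa> n) ^ n * \<kappa> n = 1) \<and>
     (\<forall>n\<ge>1. markov_partition (paired_tent (\<kappa> n)) {-1..1} (tent_partition (\<kappa> n) n))"
  apply (rule exI[of _ kap])
  using kap_prop kap_dec kap_lim kap_markov unfolding is_markov_def by blast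

end
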